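(* Let $S\ge 3$ and let $n_1,\dots,n_S$ be nonnegative integers. Write $E=E(n_1,\dots,n_S)$ and let $E(n_j\pm1)$ denote $E(n_1,\dots,n_S)$ with only the $j$-th argument replaced by $n_j\pm1$ (a value with a negative argument is $0$). Then $$2(n_2-n_1)E=(n_1+1)E(n_1+1)+n_1E(n_1-1)-(n_2+1)E(n_2+1)-n_2E(n_2-1),$$ $$(n_1+1)E(n_1+1)=n_2E(n_2-1)+\dots+n_SE(n_S-1)+(n_2+\dots+n_S-n_1)E.$$
   Context: For nonnegative integers $n_1,\dots,n_S$, $E(n_1,\dots,n_S)$ denotes the number of block derangements: $S$ players hold $n_1,\dots,n_S$ distinct cards respectively; all $N=n_1+\dots+n_S$ cards are redealt so that player $j$ again receives exactly $n_j$ cards (only which cards each player gets matters); $E$ counts the deals in which no player receives any card he originally held. Equivalently, $E(n_1,\dots,n_S)$ is the coefficient of $x_1^{n_1}\cdots x_S^{n_S}$ in $\prod_{j=1}^S(x_1+\dots+x_S-x_j)^{n_j}$. By convention $E(0,\dots,0)=1$. *)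

theory Defs
  imports "HOL-Library.FuncSet"
begin

(* Players are indexed 0..<S (player j+1 of the paper is index j).
   Player j originally holds the cards (j,k) for k < n j. *)
definition cards :: "nat \<Rightarrow> (nat \<Rightarrow> nat) \<Rightarrow> (nat \<times> nat) set" where
  "cards S n = {(j, k). j < S \<and> k < n j}"

definition block_deals :: "nat \<Rightarrow> (nat \<Rightarrow> nat) \<Rightarrow> ((nat \<times> nat) \<Rightarrow> nat) set" where
  "block_deals S n = {d \<in> cards S n \<rightarrow>\<^sub>E {..<S}.
      (\<forall>j<S. card {c \<in> cards S n. d c = j} = n j) \<and>
      (\<forall>c \<in> cards S n. d c \<noteq> fst c)}"

definition blockE :: "nat \<Rightarrow> (nat \<Rightarrow> nat) \<Rightarrow> nat" where
  "blockE S n = card (block_deals S n)"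

end

theory Submission
  imports Defs
begin


definition dls :: "nat \<Rightarrow> (nat \<Rightarrow> nat) \<Rightarrow> (nat \<Rightarrow> nat) \<Rightarrow> ((nat \<times> nat) \<Rightarrow> nat) set" where
  "dls S h r = {d \<in> cards S h \<rightarrow>\<^sub>E {..<S}.
      (\<forall>j<S. card {c \<in> cards S h. d c = j} = r j) \<and>
      (\<forall>c \<in> cards S h. d c \<noteq> fst c)}"

lemma blockE_dls: "blockE S n = card (dls S n n)"
  by (simp add: blockE_def block_deals_def dls_def)

lemma cards_Sigma: "cards S h = Sigma {..<S} (\<lambda>i. {..<h i})"
  by (auto simp: cards_def)

lemma finite_cards[simp]: "finite (cards S h)"
  by (simp add: cards_Sigma)

lemma finite_dls[simp]: "finite (dls S h r)"
proof -
  have "dls S h r \<subseteq> cards S h \<rightarrow>\<^sub>E {..<S}" by (auto simp: dls_def)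
  moreover have "finite (cards S h \<rightarrow>\<^sub>E {..<S})" by (simp add: finite_PiE)
  ultimately show ?thesis by (rule finite_subset)
qed

lemma card_ins: "finite C \<Longrightarrow> c0 \<notin> C \<Longrightarrow>
   card {c \<in> insert c0 C. P c} = card {c\<in>C. P c} + (if P c0 then 1 else 0)"
proof (cases "P c0")
  case True
  assume "finite C" "c0 \<notin> C"
  then have "{c \<in> insert c0 C. P c} = insert c0 {c\<in>C. P c}" using True by auto
  then show ?thesis using \<open>finite C\<close> \<open>c0 \<notin> C\<close> True by simp
next
  case False
  then have "{c \<in> insert c0 C. P c} = {c\<in>C. P c}" by auto
  then show ?thesis using False by simp
qed

lemma remove_last:
  assumes "i<S" "h i > 0" "j<S" "j\<noteq>i" "r j>0"
  shows "card {d\<in>dls S h r. d (i, h i - 1) = j} = card (dls S (h(i:=h i - 1)) (r(j:=r j - 1)))"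
proof -
  define c0 where "c0 = (i, h i - 1)"
  define C' where "C' = cards S (h(i:=h i - 1))"
  have cs: "cards S h = insert c0 C'" using assms(1,2)
    by (auto simp: cards_def c0_def C'_def split: if_splits)
  have nc: "c0 \<notin> C'" by (auto simp: cards_def c0_def C'_def)
  have fC: "finite C'" by (simp add: C'_def)
  let ?A = "{d\<in>dls S h r. d c0 = j}"
  let ?B = "dls S (h(i:=h i - 1)) (r(j:=r j - 1))"
  have "bij_betw (\<lambda>d. restrict d C') ?A ?B"
  proof (rule bij_betw_byWitness[where f'="\<lambda>d'. d'(c0 := j)"])
    show "\<forall>a\<in>?A. (restrict a C')(c0 := j) = a"
    proof
      fix d assume d: "d \<in> ?A"
      show "(restrict d C')(c0 := j) = d"
      proof
        fix x show "((restrict d C')(c0 := j)) x = d x"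
          using d cs by (cases x) (auto simp: dls_def PiE_def extensional_def)
      qed
    qed
    show "\<forall>a'\<in>?B. restrict (a'(c0 := j)) C' = a'"
    proof
      fix d assume d: "d \<in> ?B"
      show "restrict (d(c0 := j)) C' = d"
      proof
        fix x show "restrict (d(c0 := j)) C' x = d x"
          using d nc by (cases x) (auto simp: dls_def PiE_def extensional_def C'_def)
      qed
    qed
    show "(\<lambda>d. restrict d C') ` ?A \<subseteq> ?B"
    proof
      fix e assume "e \<in> (\<lambda>d. restrict d C') ` ?A"
      then obtain d where d: "d \<in> ?A" and e: "e = restrict d C'" by auto
      have pi: "d \<in> cards S h \<rightarrow>\<^sub>E {..<S}" and cnt: "\<And>k. k<S \<Longrightarrow> card {c \<in> cards S h. d c = k} = r k"
        and der: "\<forall>c \<in> cards S h. d c \<noteq> fst c" and dj: "d c0 = j"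
        using d by (auto simp: dls_def)
      have "e \<in> C' \<rightarrow>\<^sub>E {..<S}" using pi cs e by auto
      moreover have "card {c \<in> C'. e c = k} = (r(j:=r j - 1)) k" if "k<S" for k
      proof -
        have "{c \<in> C'. e c = k} = {c \<in> C'. d c = k}" using e by auto
        moreover have "card {c \<in> cards S h. d c = k} = card {c \<in> C'. d c = k} + (if d c0 = k then 1 else 0)"
          unfolding cs by (rule card_ins[OF fC nc])
        ultimately show ?thesis using cnt[OF that] dj by auto
      qed
      moreover have "\<forall>c \<in> C'. e c \<noteq> fst c" using der cs e by auto
      ultimately show "e \<in> ?B" by (simp add: dls_def C'_def)
    qed
    show "(\<lambda>d'. d'(c0 := j)) ` ?B \<subseteq> ?A"
    proof
      fix e assume "e \<in> (\<lambda>d'. d'(c0 := j)) ` ?B"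
      then obtain d where d: "d \<in> ?B" and e: "e = d(c0 := j)" by auto
      have pi: "d \<in> C' \<rightarrow>\<^sub>E {..<S}" and cnt: "\<And>k. k<S \<Longrightarrow> card {c \<in> C'. d c = k} = (r(j:=r j - 1)) k"
        and der: "\<forall>c \<in> C'. d c \<noteq> fst c"
        using d by (auto simp: dls_def C'_def)
      have "e \<in> cards S h \<rightarrow>\<^sub>E {..<S}" using pi cs e assms(3) by (auto simp: PiE_def extensional_def)
      moreover have "card {c \<in> cards S h. e c = k} = r k" if "k<S" for k
      proof -
        have "{c \<in> C'. e c = k} = {c \<in> C'. d c = k}" using e nc by auto
        moreover have "card {c \<in> cards S h. e c = k} = card {c \<in> C'. e c = k} + (if e c0 = k then 1 else 0)"
          unfolding cs by (rule card_ins[OF fC nc])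
        ultimately show ?thesis using cnt[OF that] e assms(5) by auto
      qed
      moreover have "\<forall>c \<in> cards S h. e c \<noteq> fst c" using der cs e assms(4) nc by (auto simp: c0_def)
      moreover have "e c0 = j" using e by simp
      ultimately show "e \<in> ?A" by (simp add: dls_def)
    qed
  qed
  then show ?thesis by (simp add: bij_betw_same_card c0_def)
qed



definition tr :: "'a \<Rightarrow> 'a \<Rightarrow> 'a \<Rightarrow> 'a" where
  "tr a b c = (if c = a then b else if c = b then a else c)"

lemma tr_tr[simp]: "tr a b (tr a b c) = c" by (simp add: tr_def)

lemma tr_dls:
  assumes "i<S" "k<h i" "k'<h i" "d \<in> dls S h r"
  shows "d \<circ> tr (i,k) (i,k') \<in> dls S h r"
proof -
  let ?t = "tr (i,k) (i,k')"
  have pi: "d \<in> cards S h \<rightarrow>\<^sub>E {..<S}" and cnt: "\<And>m. m<S \<Longrightarrow> card {c \<in> cards S h. d c = m} = r m"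
    and der: "\<forall>c \<in> cards S h. d c \<noteq> fst c"
    using assms(4) by (auto simp: dls_def)
  have tc: "?t c \<in> cards S h \<longleftrightarrow> c \<in> cards S h" for c
    using assms(1-3) by (auto simp: tr_def cards_def)
  have tf: "fst (?t c) = fst c" for c by (auto simp: tr_def)
  have "d \<circ> ?t \<in> cards S h \<rightarrow>\<^sub>E {..<S}"
  proof (rule PiE_I)
    fix c assume "c \<in> cards S h"
    then have "?t c \<in> cards S h" using tc by simp
    then show "(d \<circ> ?t) c \<in> {..<S}" using PiE_mem[OF pi] by fastforce
  next
    fix c assume c: "c \<notin> cards S h"
    have tcc: "?t c = c" using c assms(1-3) by (auto simp: tr_def cards_def)
    show "(d \<circ> ?t) c = undefined" unfolding comp_apply tcc by (rule PiE_arb[OF pi c])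
  qed
  moreover have "card {c \<in> cards S h. (d \<circ> ?t) c = m} = r m" if "m<S" for m
  proof -
    have "bij_betw ?t {c \<in> cards S h. (d \<circ> ?t) c = m} {c \<in> cards S h. d c = m}"
      by (rule bij_betw_byWitness[where f'="?t"]) (auto simp: tc)
    then show ?thesis using cnt[OF that] by (simp add: bij_betw_same_card)
  qed
  moreover have "\<forall>c \<in> cards S h. (d \<circ> ?t) c \<noteq> fst c"
  proof
    fix c assume "c \<in> cards S h"
    then have "?t c \<in> cards S h" using tc by simp
    then have "d (?t c) \<noteq> fst (?t c)" using der by blast
    then show "(d \<circ> ?t) c \<noteq> fst c" using tf by simp
  qed
  ultimately show ?thesis by (simp add: dls_def)
qed

lemma swap_inv:
  assumes "i<S" "k<h i" "k'<h i"
  shows "card {d\<in>dls S h r. d (i,k) = j} = card {d\<in>dls S h r. d (i,k') = j}"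
proof -
  let ?t = "tr (i,k) (i,k')"
  have "bij_betw (\<lambda>d. d \<circ> ?t) {d\<in>dls S h r. d (i,k) = j} {d\<in>dls S h r. d (i,k') = j}"
  proof (rule bij_betw_byWitness[where f'="\<lambda>d. d \<circ> ?t"])
    show "\<forall>a\<in>{d \<in> dls S h r. d (i, k) = j}. a \<circ> ?t \<circ> ?t = a"
      by (auto simp: fun_eq_iff)
    show "\<forall>a\<in>{d \<in> dls S h r. d (i, k') = j}. a \<circ> ?t \<circ> ?t = a"
      by (auto simp: fun_eq_iff)
    show "(\<lambda>d. d \<circ> ?t) ` {d \<in> dls S h r. d (i, k) = j} \<subseteq> {d \<in> dls S h r. d (i, k') = j}"
      using tr_dls[of i S k h k' _ r] assms by (auto simp: tr_def)
    show "(\<lambda>d. d \<circ> ?t) ` {d \<in> dls S h r. d (i, k') = j} \<subseteq> {d \<in> dls S h r. d (i, k) = j}"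
      using tr_dls[of i S k h k' _ r] assms by (auto simp: tr_def)
  qed
  then show ?thesis by (rule bij_betw_same_card)
qed

lemma card_filter_sum: "finite A \<Longrightarrow> card {x\<in>A. P x} = (\<Sum>x\<in>A. if P x then 1 else 0)"
  by (simp add: sum.inter_filter[symmetric])

lemma card_partition_fun:
  assumes "finite A" "finite J" "f ` A \<subseteq> J"
  shows "card A = (\<Sum>j\<in>J. card {a\<in>A. f a = j})"
proof -
  have "(\<Sum>j\<in>J. sum (\<lambda>_. 1::nat) {a. a\<in>A \<and> f a = j}) = sum (\<lambda>_. 1) A"
    by (rule sum.group[OF assms])
  then show ?thesis by simp
qed

lemma R1:
  assumes "i<S" "h i>0"
  shows "card (dls S h r) = (\<Sum>j\<in>{..<S}-{i}. if r j = 0 then 0 else card (dls S (h(i:=h i - 1)) (r(j:=r j - 1))))"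
proof -
  let ?c0 = "(i, h i - 1)"
  have c0: "?c0 \<in> cards S h" using assms by (auto simp: cards_def)
  have "card (dls S h r) = (\<Sum>j\<in>{..<S}. card {d\<in>dls S h r. d ?c0 = j})"
    by (rule card_partition_fun[OF finite_dls]) (use c0 in \<open>auto simp: dls_def PiE_def Pi_def\<close>)
  also have "\<dots> = card {d\<in>dls S h r. d ?c0 = i} + (\<Sum>j\<in>{..<S}-{i}. card {d\<in>dls S h r. d ?c0 = j})"
    using assms(1) by (simp add: sum.remove)
  also have "card {d\<in>dls S h r. d ?c0 = i} = 0"
  proof -
    have "{d\<in>dls S h r. d ?c0 = i} = {}"
    proof safe
      fix d assume "d \<in> dls S h r" "d ?c0 = i"
      moreover have "\<forall>c\<in>cards S h. d c \<noteq> fst c" using \<open>d \<in> dls S h r\<close> by (simp add: dls_def)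
      then have "d ?c0 \<noteq> fst ?c0" using c0 by blast
      ultimately show "d \<in> {}" by simp
    qed
    then show ?thesis by simp
  qed
  also have "(\<Sum>j\<in>{..<S}-{i}. card {d\<in>dls S h r. d ?c0 = j})
     = (\<Sum>j\<in>{..<S}-{i}. if r j = 0 then 0 else card (dls S (h(i:=h i - 1)) (r(j:=r j - 1))))"
  proof (rule sum.cong)
    fix j assume j: "j \<in> {..<S}-{i}"
    show "card {d\<in>dls S h r. d ?c0 = j} = (if r j = 0 then 0 else card (dls S (h(i:=h i - 1)) (r(j:=r j - 1))))"
    proof (cases "r j = 0")
      case True
      have "{d\<in>dls S h r. d ?c0 = j} = {}"
      proof (rule ccontr)
        assume "{d\<in>dls S h r. d ?c0 = j} \<noteq> {}"
        then obtain d where d: "d \<in> dls S h r" "d ?c0 = j" by auto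
        then have "card {c \<in> cards S h. d c = j} = 0" using True j by (auto simp: dls_def)
        moreover have "?c0 \<in> {c \<in> cards S h. d c = j}" using c0 d by auto
        ultimately show False using card_eq_0_iff[of "{c \<in> cards S h. d c = j}"] by auto
      qed
      then show ?thesis using True by simp
    next
      case False
      then show ?thesis using remove_last[of i S h j r] assms j by auto
    qed
  qed simp
  finally show ?thesis by simp
qed

lemma R2:
  assumes "j<S" "r j>0"
  shows "r j * card (dls S h r) = (\<Sum>i\<in>{..<S}-{j}. h i * card (dls S (h(i:=h i - 1)) (r(j:=r j - 1))))"
proof -
  let ?A = "dls S h r"
  have "r j * card ?A = (\<Sum>d\<in>?A. card {c\<in>cards S h. d c = j})"
    using assms(1) by (simp add: dls_def)
  also have "\<dots> = (\<Sum>d\<in>?A. \<Sum>c\<in>cards S h. if d c = j then 1 else 0)"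
    by (simp add: card_filter_sum)
  also have "\<dots> = (\<Sum>c\<in>cards S h. \<Sum>d\<in>?A. if d c = j then 1 else 0)"
    by (rule sum.swap)
  also have "\<dots> = (\<Sum>c\<in>cards S h. card {d\<in>?A. d c = j})"
    by (simp add: card_filter_sum)
  also have "\<dots> = (\<Sum>i\<in>{..<S}. \<Sum>k\<in>{..<h i}. card {d\<in>?A. d (i,k) = j})"
    by (simp add: cards_Sigma sum.Sigma)
  also have "\<dots> = (\<Sum>i\<in>{..<S}. h i * card {d\<in>?A. d (i, h i - 1) = j})"
  proof (rule sum.cong)
    fix i assume i: "i \<in> {..<S}"
    show "(\<Sum>k\<in>{..<h i}. card {d\<in>?A. d (i,k) = j}) = h i * card {d\<in>?A. d (i, h i - 1) = j}"
    proof (cases "h i = 0")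
      case False
      have "(\<Sum>k\<in>{..<h i}. card {d\<in>?A. d (i,k) = j}) = (\<Sum>k\<in>{..<h i}. card {d\<in>?A. d (i, h i - 1) = j})"
        by (rule sum.cong) (use i False in \<open>auto intro: swap_inv\<close>)
      then show ?thesis by simp
    qed simp
  qed simp
  also have "\<dots> = h j * card {d\<in>?A. d (j, h j - 1) = j} + (\<Sum>i\<in>{..<S}-{j}. h i * card {d\<in>?A. d (i, h i - 1) = j})"
    using assms(1) by (simp add: sum.remove)
  also have "h j * card {d\<in>?A. d (j, h j - 1) = j} = 0"
  proof (cases "h j = 0")
    case False
    then have "(j, h j - 1) \<in> cards S h" using assms by (auto simp: cards_def)
    then have "{d\<in>?A. d (j, h j - 1) = j} = {}"
    proof safe
      fix d assume "(j, h j - 1) \<in> cards S h" "d \<in> ?A" "d (j, h j - 1) = j"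
      moreover have "\<forall>c\<in>cards S h. d c \<noteq> fst c" using \<open>d \<in> ?A\<close> by (simp add: dls_def)
      then have "d (j, h j - 1) \<noteq> fst (j, h j - 1)" using \<open>(j, h j - 1) \<in> cards S h\<close> by blast
      ultimately show "d \<in> {}" by simp
    qed
    then show ?thesis by simp
  qed simp
  also have "(\<Sum>i\<in>{..<S}-{j}. h i * card {d\<in>?A. d (i, h i - 1) = j})
      = (\<Sum>i\<in>{..<S}-{j}. h i * card (dls S (h(i:=h i - 1)) (r(j:=r j - 1))))"
  proof (rule sum.cong)
    fix i assume i: "i \<in> {..<S}-{j}"
    show "h i * card {d\<in>?A. d (i, h i - 1) = j} = h i * card (dls S (h(i:=h i - 1)) (r(j:=r j - 1)))"
      using remove_last[of i S h j r] i assms by (cases "h i = 0") auto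
  qed simp
  finally show ?thesis by simp
qed



lemma main_gen:
  fixes S p :: nat and n :: "nat \<Rightarrow> nat"
  assumes p: "p < S"
  defines "I \<equiv> {..<S} - {p}"
  shows "int (n p + 1) * int (card (dls S (n(p := n p + 1)) (n(p := n p + 1))))
     = (\<Sum>j\<in>I. int (n j) * int (card (dls S (n(j := n j - 1)) (n(j := n j - 1)))))
       + ((\<Sum>j\<in>I. int (n j)) - int (n p)) * int (card (dls S n n))"
proof -
  define D where "D h r = card (dls S h r)" for h r
  define m where "m = n(p := n p + 1)"
  define E where "E = D n n"
  define g where "g i k = n i * (if n k = 0 then 0 else D (n(i:=n i - 1)) (n(k:=n k - 1)))" for i k
  have fI: "finite I" by (simp add: I_def)
  have pI: "p \<notin> I" by (simp add: I_def)
  have A: "(n p + 1) * D m m = (\<Sum>i\<in>I. n i * D (m(i:=n i - 1)) n)"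
  proof -
    have mp: "m p = n p + 1" by (simp add: m_def)
    have "m p * D m m = (\<Sum>i\<in>{..<S}-{p}. m i * D (m(i:=m i - 1)) (m(p:=m p - 1)))"
      unfolding D_def by (rule R2) (use p in \<open>auto simp: m_def\<close>)
    also have "m(p:=m p - 1) = n" by (simp add: m_def)
    also have "(\<Sum>i\<in>{..<S}-{p}. m i * D (m(i:=m i - 1)) n) = (\<Sum>i\<in>I. n i * D (m(i:=n i - 1)) n)"
      by (rule sum.cong) (auto simp: I_def m_def)
    finally show ?thesis by (simp only: mp)
  qed
  have B: "n i * D (m(i:=n i - 1)) n = n i * D (n(i:=n i - 1)) (n(i:=n i - 1)) + (\<Sum>k\<in>I-{i}. g i k)"
    if i: "i \<in> I" for i
  proof (cases "n i = 0")
    case True then show ?thesis by (simp add: g_def)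
  next
    case False
    have ip: "i \<noteq> p" using i by (simp add: I_def)
    have "D (m(i:=n i - 1)) n = (\<Sum>k\<in>{..<S}-{p}. if n k = 0 then 0 else D ((m(i:=n i - 1))(p := (m(i:=n i - 1)) p - 1)) (n(k:=n k - 1)))"
      unfolding D_def by (rule R1) (use p ip in \<open>auto simp: m_def\<close>)
    also have "(m(i:=n i - 1))(p := (m(i:=n i - 1)) p - 1) = n(i:=n i - 1)"
      using ip by (auto simp: m_def fun_eq_iff)
    also have "(\<Sum>k\<in>{..<S}-{p}. if n k = 0 then 0 else D (n(i:=n i - 1)) (n(k:=n k - 1)))
       = D (n(i:=n i - 1)) (n(i:=n i - 1)) + (\<Sum>k\<in>I-{i}. if n k = 0 then 0 else D (n(i:=n i - 1)) (n(k:=n k - 1)))"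
      using i False fI by (simp add: I_def[symmetric] sum.remove)
    finally have eq: "D (m(i:=n i - 1)) n = D (n(i:=n i - 1)) (n(i:=n i - 1)) + (\<Sum>k\<in>I-{i}. if n k = 0 then 0 else D (n(i:=n i - 1)) (n(k:=n k - 1)))" .
    show ?thesis unfolding g_def by (simp only: eq add_mult_distrib2 sum_distrib_left)
  qed
  have C: "n k * E = n p * (if n k = 0 then 0 else D (n(p:=n p - 1)) (n(k:=n k - 1))) + (\<Sum>i\<in>I-{k}. g i k)"
    if k: "k \<in> I" for k
  proof (cases "n k = 0")
    case True then show ?thesis by (simp add: g_def)
  next
    case False
    have kS: "k < S" and kp: "k \<noteq> p" using k by (auto simp: I_def)
    have "n k * E = (\<Sum>i\<in>{..<S}-{k}. n i * D (n(i:=n i - 1)) (n(k:=n k - 1)))"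
      unfolding E_def D_def by (rule R2) (use kS False in auto)
    also have "{..<S}-{k} = insert p (I-{k})" using p kp by (auto simp: I_def)
    also have "(\<Sum>i\<in>insert p (I-{k}). n i * D (n(i:=n i - 1)) (n(k:=n k - 1)))
        = n p * D (n(p:=n p - 1)) (n(k:=n k - 1)) + (\<Sum>i\<in>I-{k}. n i * D (n(i:=n i - 1)) (n(k:=n k - 1)))"
      using fI pI by simp
    finally show ?thesis using False by (simp add: g_def)
  qed
  have Dst: "n p * (\<Sum>k\<in>I. if n k = 0 then 0 else D (n(p:=n p - 1)) (n(k:=n k - 1))) = n p * E"
  proof (cases "n p = 0")
    case False
    have "E = (\<Sum>k\<in>{..<S}-{p}. if n k = 0 then 0 else D (n(p:=n p - 1)) (n(k:=n k - 1)))"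
      unfolding E_def D_def by (rule R1) (use p False in auto)
    then show ?thesis by (simp add: I_def)
  qed simp
  have sw: "(\<Sum>i\<in>I. \<Sum>k\<in>I-{i}. g i k) = (\<Sum>k\<in>I. \<Sum>i\<in>I-{k}. g i k)"
  proof -
    have e1: "I - {x} = {y. y \<in> I \<and> x \<noteq> y}" for x by auto
    have e2: "I - {x} = {y. y \<in> I \<and> y \<noteq> x}" for x by auto
    have "(\<Sum>i\<in>I. \<Sum>k\<in>I-{i}. g i k) = (\<Sum>i\<in>I. \<Sum>k\<in>{y. y \<in> I \<and> i \<noteq> y}. g i k)"
      by (rule sum.cong) (auto simp: e1)
    also have "\<dots> = (\<Sum>k\<in>I. \<Sum>i\<in>{x. x \<in> I \<and> x \<noteq> k}. g i k)"
      by (rule sum.swap_restrict[OF fI fI])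
    also have "\<dots> = (\<Sum>k\<in>I. \<Sum>i\<in>I-{k}. g i k)"
      by (rule sum.cong) (auto simp: e2)
    finally show ?thesis .
  qed
  define X where "X = (\<Sum>i\<in>I. \<Sum>k\<in>I-{i}. g i k)"
  have L: "(n p + 1) * D m m = (\<Sum>i\<in>I. n i * D (n(i:=n i - 1)) (n(i:=n i - 1))) + X"
    unfolding A X_def sum.distrib[symmetric] by (rule sum.cong[OF refl], rule B, assumption)
  have R: "(\<Sum>k\<in>I. n k) * E = n p * E + X"
  proof -
    have "(\<Sum>k\<in>I. n k) * E = (\<Sum>k\<in>I. n k * E)" by (simp add: sum_distrib_right)
    also have "\<dots> = (\<Sum>k\<in>I. n p * (if n k = 0 then 0 else D (n(p:=n p - 1)) (n(k:=n k - 1))) + (\<Sum>i\<in>I-{k}. g i k))"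
      by (rule sum.cong) (simp_all add: C)
    also have "\<dots> = n p * E + X"
      by (simp add: sum.distrib sum_distrib_left[symmetric] Dst X_def sw)
    finally show ?thesis .
  qed
  have L': "int (n p + 1) * int (D m m) = (\<Sum>i\<in>I. int (n i) * int (D (n(i:=n i - 1)) (n(i:=n i - 1)))) + int X"
    using arg_cong[OF L, of int] by (simp add: algebra_simps)
  have R': "(\<Sum>k\<in>I. int (n k)) * int E = int (n p) * int E + int X"
    using arg_cong[OF R, of int] by (simp add: of_nat_sum)
  show ?thesis using L' R' unfolding D_def E_def m_def by (simp add: algebra_simps)
qed


theorem mainTheorem8:
  fixes S :: nat and n :: "nat \<Rightarrow> nat"
  assumes "S \<ge> 3"
  shows "(2 * (int (n 1) - int (n 0)) * int (blockE S n) =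
           int (n 0 + 1) * int (blockE S (n(0 := n 0 + 1)))
         + int (n 0) * int (blockE S (n(0 := n 0 - 1)))
         - int (n 1 + 1) * int (blockE S (n(1 := n 1 + 1)))
         - int (n 1) * int (blockE S (n(1 := n 1 - 1)))) \<and>
         (int (n 0 + 1) * int (blockE S (n(0 := n 0 + 1))) =
           (\<Sum>j\<in>{1..<S}. int (n j) * int (blockE S (n(j := n j - 1))))
         + ((\<Sum>j\<in>{1..<S}. int (n j)) - int (n 0)) * int (blockE S n))"
proof -
  define a where "a j = int (n j) * int (blockE S (n(j := n j - 1)))" for j
  define b where "b j = int (n j)" for j
  have G0: "int (n 0 + 1) * int (blockE S (n(0 := n 0 + 1)))
     = (\<Sum>j\<in>{..<S}-{0}. a j) + ((\<Sum>j\<in>{..<S}-{0}. b j) - int (n 0)) * int (blockE S n)"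
    using main_gen[of 0 S n] assms unfolding a_def b_def blockE_dls by simp
  have G1: "int (n 1 + 1) * int (blockE S (n(1 := n 1 + 1)))
     = (\<Sum>j\<in>{..<S}-{1}. a j) + ((\<Sum>j\<in>{..<S}-{1}. b j) - int (n 1)) * int (blockE S n)"
    using main_gen[of 1 S n] assms unfolding a_def b_def blockE_dls by simp
  have s0a: "(\<Sum>j\<in>{..<S}. a j) = a 0 + (\<Sum>j\<in>{..<S}-{0}. a j)"
    using assms by (simp add: sum.remove)
  have s1a: "(\<Sum>j\<in>{..<S}. a j) = a 1 + (\<Sum>j\<in>{..<S}-{1}. a j)"
    using assms by (simp add: sum.remove)
  have s0b: "(\<Sum>j\<in>{..<S}. b j) = b 0 + (\<Sum>j\<in>{..<S}-{0}. b j)"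
    using assms by (simp add: sum.remove)
  have s1b: "(\<Sum>j\<in>{..<S}. b j) = b 1 + (\<Sum>j\<in>{..<S}-{1}. b j)"
    using assms by (simp add: sum.remove)
  have I0: "{1..<S} = {..<S}-{0}" by auto
  have "2 * (int (n 1) - int (n 0)) * int (blockE S n) =
           int (n 0 + 1) * int (blockE S (n(0 := n 0 + 1)))
         + a 0 - int (n 1 + 1) * int (blockE S (n(1 := n 1 + 1))) - a 1"
  proof -
    define E where "E = int (blockE S n)"
    define B0 where "B0 = (\<Sum>j\<in>{..<S}-{0}. b j)"
    define B1 where "B1 = (\<Sum>j\<in>{..<S}-{1}. b j)"
    have key: "(B0 - b 0) - (B1 - b 1) = 2*(b 1 - b 0)" using s0b s1b unfolding B0_def B1_def by (simp add: algebra_simps)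
    have k2: "(B0 - b 0) * E - (B1 - b 1) * E = 2*(b 1 - b 0) * E"
      by (metis key left_diff_distrib)
    show ?thesis using G0 G1 s0a s1a k2 unfolding E_def B0_def B1_def b_def by linarith
  qed
  moreover have "int (n 0 + 1) * int (blockE S (n(0 := n 0 + 1))) =
           (\<Sum>j\<in>{1..<S}. a j) + ((\<Sum>j\<in>{1..<S}. b j) - int (n 0)) * int (blockE S n)"
    unfolding I0 by (rule G0)
  ultimately show ?thesis unfolding a_def b_def by simp
qed

end
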